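(* Suppose the description of $K$ contains a ball constraint, i.e. $g_m(x)=R^2-\sum_{i=1}^n x_i^2$ for some real $R$. Then for every integer $d\ge d_{\min}$, every feasible point $y=(y_\alpha)_{|\alpha|\le 2d}$ of $P_d$ satisfies $$\sqrt{\textstyle\sum_{|\alpha|\le 2d} y_\alpha^2}\;\le\;\sqrt{\binom{n+d}{n}}\;\sum_{k=0}^{d}R^{2k},$$ i.e. the feasible set of $P_d$ is contained in the Euclidean ball of that radius centered at the origin.
   Context: Polynomial optimization problem: minimize $f(x)=\sum_\alpha f_\alpha x^\alpha$ over $x\in\mathbb R^n$ subject to $g_i(x)=\sum_\alpha g_{i,\alpha}x^\alpha\ge 0$, $i=1,\dots,m$, with $f,g_i$ real polynomials; $x^\alpha=x_1^{\alpha_1}\cdots x_n^{\alpha_n}$, $|\alpha|=\sum_i\alpha_i$; $K=\{x: g_i(x)\ge0,\ i=1,\dots,m\}$. Set $g_0:=1$ and let $d_i$ be the smallest integer $\ge \deg(g_i)/2$, $i=0,\dots,m$; $d_{\min}:=\max_{i}d_i$ (and assume $\deg f\le 2d$). For $y=(y_\alpha)_{|\alpha|\le 2d}$ the localizing matrix is $M_{d-d_i}(g_iy):=\big(\sum_\gamma g_{i,\gamma}y_{\alpha+\beta+\gamma}\big)_{|\alpha|,|\beta|\le d-d_i}$, and $M_d(y):=M_d(g_0y)$. The primal problem $P_d$ is: $\inf_y \sum_\alpha f_\alpha y_\alpha$ subject to $y_0=1$ and $M_{d-d_i}(g_iy)\succeq 0$ for $i=0,1,\dots,m$ (real symmetric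 positive semidefiniteness). *)

theory Defs
  imports Complex_Main
begin

text \<open>Multivariate polynomials in the variables x_0,...,x_{n-1} are represented by
  their coefficient functions on multi-indices. A multi-index is a function
  alpha :: nat => nat vanishing outside {0..<n}; x^alpha = prod x_i^(alpha i).\<close>

type_synonym mindex = "nat \<Rightarrow> nat"
type_synonym rpoly = "mindex \<Rightarrow> real"

definition mdeg :: "mindex \<Rightarrow> nat \<Rightarrow> nat" where
  "mdeg \<alpha> n = (\<Sum>i<n. \<alpha> i)"

definition mindices :: "nat \<Rightarrow> nat \<Rightarrow> mindex set" where
  "mindices n k = {\<alpha>. (\<forall>i\<ge>n. \<alpha> i = 0) \<and> mdeg \<alpha> n \<le> k}"

definition madd :: "mindex \<Rightarrow> mindex \<Rightarrow> mindex" where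
  "madd \<alpha> \<beta> = (\<lambda>j. \<alpha> j + \<beta> j)"

definition mzero :: mindex where
  "mzero = (\<lambda>_. 0)"

definition is_poly :: "nat \<Rightarrow> rpoly \<Rightarrow> bool" where
  "is_poly n p \<longleftrightarrow> finite {\<alpha>. p \<alpha> \<noteq> 0} \<and> (\<forall>\<alpha>. p \<alpha> \<noteq> 0 \<longrightarrow> (\<forall>i\<ge>n. \<alpha> i = 0))"

text \<open>Total degree (the zero polynomial gets degree 0).\<close>
definition pdeg :: "nat \<Rightarrow> rpoly \<Rightarrow> nat" where
  "pdeg n p = Max (insert 0 ((\<lambda>\<alpha>. mdeg \<alpha> n) ` {\<alpha>. p \<alpha> \<noteq> 0}))"

definition halfdeg :: "nat \<Rightarrow> rpoly \<Rightarrow> nat" where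
  "halfdeg n p = (pdeg n p + 1) div 2"

definition one_poly :: rpoly where
  "one_poly \<alpha> = (if \<alpha> = mzero then 1 else 0)"

definition ball_poly :: "nat \<Rightarrow> real \<Rightarrow> rpoly" where
  "ball_poly n R \<alpha> =
     (if \<alpha> = mzero then R\<^sup>2
      else if (\<exists>i<n. \<alpha> = (\<lambda>j. if j = i then 2 else 0)) then -1 else 0)"

definition locmat :: "nat \<Rightarrow> rpoly \<Rightarrow> (mindex \<Rightarrow> real) \<Rightarrow> mindex \<Rightarrow> mindex \<Rightarrow> real" where
  "locmat n g y \<alpha> \<beta> = (\<Sum>\<gamma>\<in>mindices n (pdeg n g). g \<gamma> * y (madd (madd \<alpha> \<beta>) \<gamma>))"

definition psd_on :: "mindex set \<Rightarrow> (mindex \<Rightarrow> mindex \<Rightarrow> real) \<Rightarrow> bool" where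
  "psd_on A M \<longleftrightarrow> (\<forall>v :: mindex \<Rightarrow> real. 0 \<le> (\<Sum>\<alpha>\<in>A. \<Sum>\<beta>\<in>A. v \<alpha> * M \<alpha> \<beta> * v \<beta>))"

definition gpoly :: "(nat \<Rightarrow> rpoly) \<Rightarrow> nat \<Rightarrow> rpoly" where
  "gpoly g i = (if i = 0 then one_poly else g i)"

definition d_min :: "nat \<Rightarrow> (nat \<Rightarrow> rpoly) \<Rightarrow> nat \<Rightarrow> nat" where
  "d_min n g m = Max ((\<lambda>i. halfdeg n (gpoly g i)) ` {0..m})"

definition feasible_Pd :: "nat \<Rightarrow> (nat \<Rightarrow> rpoly) \<Rightarrow> nat \<Rightarrow> nat \<Rightarrow> (mindex \<Rightarrow> real) \<Rightarrow> bool" where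
  "feasible_Pd n g m d y \<longleftrightarrow>
     y mzero = 1 \<and>
     (\<forall>i\<in>{0..m}. psd_on (mindices n (d - halfdeg n (gpoly g i))) (locmat n (gpoly g i) y))"

end

theory Submission imports Defs begin

lemma mindices_finite: "finite (mindices n k)"
proof -
  let ?f = "\<lambda>xs::nat list. \<lambda>i. if i < length xs then xs!i else 0"
  have "mindices n k \<subseteq> ?f ` {xs. set xs \<subseteq> {..k} \<and> length xs = n}"
  proof
    fix \<alpha> assume a: "\<alpha> \<in> mindices n k"
    hence z: "\<forall>i\<ge>n. \<alpha> i = 0" and s: "(\<Sum>i<n. \<alpha> i) \<le> k" by (auto simp: mindices_def mdeg_def)
    have le: "\<alpha> i \<le> k" if "i < n" for i
      using member_le_sum[of i "{..<n}" \<alpha>] that s by auto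
    have "\<alpha> = ?f (map \<alpha> [0..<n])" using z by (auto simp: fun_eq_iff)
    moreover have "set (map \<alpha> [0..<n]) \<subseteq> {..k}" using le by auto
    ultimately show "\<alpha> \<in> ?f ` {xs. set xs \<subseteq> {..k} \<and> length xs = n}" by force
  qed
  moreover have "finite {xs. set xs \<subseteq> {..k} \<and> length xs = n}"
    by (rule finite_lists_length_eq) auto
  ultimately show ?thesis by (meson finite_surj)
qed

lemma mindices_0: "mindices n 0 = {mzero}"
  by (auto simp: mindices_def mdeg_def mzero_def fun_eq_iff) (meson lessThan_iff not_le)

lemma pdeg_one: "pdeg n one_poly = 0"
proof -
  have "{\<alpha>. one_poly \<alpha> \<noteq> 0} = {mzero}" by (auto simp: one_poly_def)
  thus ?thesis by (simp add: pdeg_def mdeg_def mzero_def)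
qed

lemma locmat_one: "locmat n one_poly y \<alpha> \<beta> = y (madd \<alpha> \<beta>)"
  by (simp add: locmat_def pdeg_one mindices_0 one_poly_def madd_def mzero_def)

lemma halfdeg_one: "halfdeg n one_poly = 0"
  by (simp add: halfdeg_def pdeg_one)

definition e2 :: "nat \<Rightarrow> mindex" where "e2 i = (\<lambda>j. if j = i then 2 else 0)"

lemma ball_nz: "{\<alpha>. ball_poly n R \<alpha> \<noteq> 0} \<subseteq> insert mzero (e2 ` {..<n})"
  by (auto simp: ball_poly_def e2_def)

lemma ball_nz2: "e2 ` {..<n} \<subseteq> {\<alpha>. ball_poly n R \<alpha> \<noteq> 0}"
  by (auto simp: ball_poly_def e2_def mzero_def fun_eq_iff)

lemma mdeg_e2: "i < n \<Longrightarrow> mdeg (e2 i) n = 2"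
  by (simp add: mdeg_def e2_def)

lemma mdeg_mzero: "mdeg mzero n = 0" by (simp add: mdeg_def mzero_def)

lemma pdeg_ball: assumes "n \<ge> 1" shows "pdeg n (ball_poly n R) = 2"
proof -
  let ?S = "{\<alpha>. ball_poly n R \<alpha> \<noteq> 0}"
  let ?I = "(\<lambda>\<alpha>. mdeg \<alpha> n) ` ?S"
  have sub: "?I \<subseteq> {0,2}"
  proof
    fix x assume "x \<in> ?I"
    then obtain \<alpha> where a: "\<alpha> \<in> ?S" and x: "x = mdeg \<alpha> n" by blast
    from a ball_nz have "\<alpha> \<in> insert mzero (e2 ` {..<n})" by blast
    thus "x \<in> {0,2}" using x mdeg_e2 mdeg_mzero by auto
  qed
  have "(0::nat) \<in> {..<n}" using assms by simp
  hence e0: "e2 0 \<in> ?S" using ball_nz2[of n R] by blast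
  have "mdeg (e2 0) n = 2" using assms by (intro mdeg_e2) simp
  hence two: "2 \<in> ?I" using e0 by (metis rev_image_eqI)
  have fin: "finite (insert 0 ?I)" using sub by (simp add: finite_subset)
  have "Max (insert 0 ?I) = 2"
  proof (rule Max_eqI[OF fin])
    show "y \<le> 2" if "y \<in> insert 0 ?I" for y using that sub by auto
    show "2 \<in> insert 0 ?I" using two by simp
  qed
  thus ?thesis by (simp add: pdeg_def)
qed

lemma e2_in: "i < n \<Longrightarrow> e2 i \<in> mindices n 2"
  by (auto simp: mindices_def mdeg_e2) (auto simp: e2_def)

lemma mzero_in: "mzero \<in> mindices n k"
  by (auto simp: mindices_def mdeg_mzero) (simp add: mzero_def)

lemma e2_inj: "inj e2" by (auto simp: inj_def e2_def fun_eq_iff)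

lemma locmat_ball: assumes "n \<ge> 1"
  shows "locmat n (ball_poly n R) y \<alpha> \<beta> = R\<^sup>2 * y (madd \<alpha> \<beta>) - (\<Sum>i<n. y (madd (madd \<alpha> \<beta>) (e2 i)))"
proof -
  let ?g = "ball_poly n R"
  let ?T = "insert mzero (e2 ` {..<n})"
  have "locmat n ?g y \<alpha> \<beta> = (\<Sum>\<gamma>\<in>mindices n 2. ?g \<gamma> * y (madd (madd \<alpha> \<beta>) \<gamma>))"
    by (simp add: locmat_def pdeg_ball[OF assms])
  also have "\<dots> = (\<Sum>\<gamma>\<in>?T. ?g \<gamma> * y (madd (madd \<alpha> \<beta>) \<gamma>))"
    apply (rule sum.mono_neutral_right[OF mindices_finite])
    using e2_in mzero_in ball_nz[of n R] by auto
  also have "\<dots> = ?g mzero * y (madd (madd \<alpha> \<beta>) mzero) + (\<Sum>\<gamma>\<in>e2 ` {..<n}. ?g \<gamma> * y (madd (madd \<alpha> \<beta>) \<gamma>))"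
    apply (rule sum.insert) apply simp
    by (auto simp: e2_def mzero_def fun_eq_iff) (metis zero_neq_numeral)
  also have "(\<Sum>\<gamma>\<in>e2 ` {..<n}. ?g \<gamma> * y (madd (madd \<alpha> \<beta>) \<gamma>)) = (\<Sum>i<n. ?g (e2 i) * y (madd (madd \<alpha> \<beta>) (e2 i)))"
    by (rule sum.reindex_cong[OF inj_on_subset[OF e2_inj]]) auto
  also have "\<dots> = (\<Sum>i<n. - y (madd (madd \<alpha> \<beta>) (e2 i)))"
    apply (rule sum.cong, simp)
    apply (simp add: ball_poly_def)
    by (auto simp: e2_def mzero_def fun_eq_iff)
  moreover have "?g mzero = R\<^sup>2" by (simp add: ball_poly_def)
  moreover have "madd (madd \<alpha> \<beta>) mzero = madd \<alpha> \<beta>" by (simp add: madd_def mzero_def)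
  ultimately show ?thesis
    by (simp add: sum_negf)
qed


lemma quad_disc:
  fixes a b c :: real
  assumes h: "\<And>t. 0 \<le> a*t^2 + 2*b*t + c" and a: "0 \<le> a"
  shows "b^2 \<le> a*c"
proof (cases "a = 0")
  case True
  have c: "0 \<le> c" using h[of 0] by simp
  show ?thesis
  proof (rule ccontr)
    assume "\<not> ?thesis"
    hence "b \<noteq> 0" using True by simp
    have "0 \<le> 2*b*(-(c+1)/(2*b)) + c" using h[of "-(c+1)/(2*b)"] True by simp
    also have "\<dots> = -1" using \<open>b \<noteq> 0\<close> by (simp add: field_simps)
    finally show False by simp
  qed
next
  case False
  hence ap: "a > 0" using a by simp
  have "0 \<le> a*(-b/a)^2 + 2*b*(-b/a) + c" by (rule h)
  also have "\<dots> = (a*c - b^2)/a" using ap by (simp add: field_simps power2_eq_square)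
  finally have "0 \<le> (a*c - b^2)/a" .
  thus ?thesis using ap by (simp add: zero_le_divide_iff)
qed

lemma sum_delta2:
  fixes f :: "'a \<Rightarrow> real"
  assumes "finite A" "x \<in> A" "z \<in> A" "x \<noteq> z"
  shows "(\<Sum>w\<in>A. (if w = x then t else if w = z then s else 0) * f w) = t * f x + s * f z"
proof -
  have "(\<Sum>w\<in>A. (if w = x then t else if w = z then s else 0) * f w)
      = (\<Sum>w\<in>A. (if w = x then t * f w else 0) + (if w = z then s * f w else 0))"
    by (rule sum.cong) (use assms in auto)
  also have "\<dots> = t * f x + s * f z" using assms by (simp add: sum.distrib)
  finally show ?thesis .
qed

lemma psd_diag:
  assumes "finite A" "psd_on A M" "x \<in> A"
  shows "0 \<le> M x x"
proof -
  let ?v = "\<lambda>w. if w = x then (1::real) else 0"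
  have "0 \<le> (\<Sum>a\<in>A. \<Sum>b\<in>A. ?v a * M a b * ?v b)" using assms(2) by (simp add: psd_on_def)
  also have "\<dots> = (\<Sum>a\<in>A. if a = x then (\<Sum>b\<in>A. if b = x then M a b else 0) else 0)"
    by (rule sum.cong[OF refl]) (auto intro!: sum.cong)
  also have "\<dots> = M x x" using assms by simp
  finally show ?thesis .
qed

lemma psd_off:
  assumes fin: "finite A" and psd: "psd_on A M" and x: "x \<in> A" and z: "z \<in> A"
    and sym: "M x z = M z x"
  shows "(M x z)^2 \<le> M x x * M z z"
proof (cases "x = z")
  case True thus ?thesis by (simp add: power2_eq_square)
next
  case False
  have "0 \<le> M x x * t^2 + 2 * M x z * t + M z z" for t
  proof -
    let ?v = "\<lambda>w. if w = x then t else if w = z then 1 else (0::real)"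
    have "0 \<le> (\<Sum>a\<in>A. \<Sum>b\<in>A. ?v a * M a b * ?v b)" using psd by (simp add: psd_on_def)
    also have "\<dots> = (\<Sum>a\<in>A. ?v a * (t * M a x + 1 * M a z))"
    proof (rule sum.cong[OF refl])
      fix a assume "a \<in> A"
      have "(\<Sum>b\<in>A. ?v a * M a b * ?v b) = ?v a * (\<Sum>b\<in>A. ?v b * M a b)"
        by (simp add: sum_distrib_left mult_ac)
      also have "(\<Sum>b\<in>A. ?v b * M a b) = t * M a x + 1 * M a z"
        by (rule sum_delta2[OF fin x z False])
      finally show "(\<Sum>b\<in>A. ?v a * M a b * ?v b) = ?v a * (t * M a x + 1 * M a z)" .
    qed
    also have "\<dots> = t * (t * M x x + 1 * M x z) + 1 * (t * M z x + 1 * M z z)"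
      by (rule sum_delta2[OF fin x z False])
    also have "\<dots> = M x x * t^2 + 2 * M x z * t + M z z" using sym
      by (simp add: algebra_simps power2_eq_square)
    finally show ?thesis .
  qed
  from quad_disc[OF this psd_diag[OF fin psd x]] show ?thesis .
qed

lemma psd_frob:
  assumes fin: "finite A" and psd: "psd_on A M" and sym: "\<And>x z. x \<in> A \<Longrightarrow> z \<in> A \<Longrightarrow> M x z = M z x"
  shows "(\<Sum>a\<in>A. \<Sum>b\<in>A. (M a b)^2) \<le> (\<Sum>a\<in>A. M a a)^2"
proof -
  have "(\<Sum>a\<in>A. \<Sum>b\<in>A. (M a b)^2) \<le> (\<Sum>a\<in>A. \<Sum>b\<in>A. M a a * M b b)"
    by (intro sum_mono psd_off[OF fin psd] sym)
  also have "\<dots> = (\<Sum>a\<in>A. M a a)^2"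
    by (simp add: power2_eq_square sum_product)
  finally show ?thesis .
qed


definition spl :: "nat \<Rightarrow> mindex \<Rightarrow> mindex" where
  "spl d \<gamma> = (\<lambda>i. min (\<gamma> i) (d - (\<Sum>j<i. \<gamma> j)))"

lemma spl_sum: "(\<Sum>i<k. spl (d::nat) \<gamma> i) = min d (\<Sum>i<k. \<gamma> i)"
  by (induction k) (auto simp: spl_def)

lemma mdeg_madd: "mdeg (madd a b) n = mdeg a n + mdeg b n"
  by (simp add: mdeg_def madd_def sum.distrib)

lemma split_in:
  assumes "\<gamma> \<in> mindices n (2*d)"
  shows "spl d \<gamma> \<in> mindices n d" "(\<lambda>i. \<gamma> i - spl d \<gamma> i) \<in> mindices n d"
    "madd (spl d \<gamma>) (\<lambda>i. \<gamma> i - spl d \<gamma> i) = \<gamma>"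
proof -
  have z: "\<forall>i\<ge>n. \<gamma> i = 0" and s: "(\<Sum>i<n. \<gamma> i) \<le> 2*d" using assms by (auto simp: mindices_def mdeg_def)
  have le: "spl d \<gamma> i \<le> \<gamma> i" for i by (simp add: spl_def)
  show "spl d \<gamma> \<in> mindices n d" using z le spl_sum[of d \<gamma> n]
    by (auto simp: mindices_def mdeg_def) (metis le_zero_eq)
  have "(\<Sum>i<n. \<gamma> i - spl d \<gamma> i) = (\<Sum>i<n. \<gamma> i) - (\<Sum>i<n. spl d \<gamma> i)"
    by (rule sum_subtractf_nat) (use le in auto)
  hence "(\<Sum>i<n. \<gamma> i - spl d \<gamma> i) \<le> d" using spl_sum[of d \<gamma> n] s by simp
  thus "(\<lambda>i. \<gamma> i - spl d \<gamma> i) \<in> mindices n d" using z by (auto simp: mindices_def mdeg_def)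
  show "madd (spl d \<gamma>) (\<lambda>i. \<gamma> i - spl d \<gamma> i) = \<gamma>" using le by (auto simp: madd_def fun_eq_iff)
qed

lemma norm_bound:
  fixes y :: "mindex \<Rightarrow> real"
  shows "(\<Sum>\<gamma>\<in>mindices n (2*d). (y \<gamma>)^2) \<le> (\<Sum>a\<in>mindices n d. \<Sum>b\<in>mindices n d. (y (madd a b))^2)"
proof -
  let ?S = "mindices n (2*d)" and ?A = "mindices n d"
  let ?phi = "\<lambda>\<gamma>. (spl d \<gamma>, \<lambda>i. \<gamma> i - spl d \<gamma> i)"
  let ?h = "\<lambda>p. (y (madd (fst p) (snd p)))^2"
  have inj: "inj_on ?phi ?S"
  proof
    fix u v assume "u \<in> ?S" "v \<in> ?S" "?phi u = ?phi v"
    hence e1: "spl d u = spl d v" and e2: "(\<lambda>i. u i - spl d u i) = (\<lambda>i. v i - spl d v i)" by (simp only: prod.inject)+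
    have "u = madd (spl d u) (\<lambda>i. u i - spl d u i)" using split_in(3)[of u n d] \<open>u \<in> ?S\<close> by simp
    also have "\<dots> = madd (spl d v) (\<lambda>i. v i - spl d v i)" using e1 e2 by metis
    also have "\<dots> = v" using split_in(3)[of v n d] \<open>v \<in> ?S\<close> by simp
    finally show "u = v" .
  qed
  have "(\<Sum>\<gamma>\<in>?S. (y \<gamma>)^2) = (\<Sum>\<gamma>\<in>?S. ?h (?phi \<gamma>))"
    by (rule sum.cong) (auto simp: split_in(3))
  also have "\<dots> = (\<Sum>p\<in>?phi ` ?S. ?h p)" by (subst sum.reindex[OF inj]) (simp add: o_def)
  also have "\<dots> \<le> (\<Sum>p\<in>?A \<times> ?A. ?h p)"
    by (rule sum_mono2) (auto simp: mindices_finite split_in)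
  also have "\<dots> = (\<Sum>a\<in>?A. \<Sum>b\<in>?A. (y (madd a b))^2)"
    by (subst sum.cartesian_product) (simp add: case_prod_beta)
  finally show ?thesis .
qed

definition e1 :: "nat \<Rightarrow> mindex" where "e1 i = (\<lambda>j. if j = i then 1 else 0)"

lemma mdeg_e1: "i < n \<Longrightarrow> mdeg (e1 i) n = 1"
  by (simp add: mdeg_def e1_def)

lemma D_e1: "madd (madd (madd a (e1 i)) (madd a (e1 i))) = madd (madd (madd a a) (e2 i))"
  by (simp add: madd_def e1_def e2_def fun_eq_iff)

lemma D_e1': "madd (madd a (e1 i)) (madd a (e1 i)) = madd (madd a a) (e2 i)"
  by (simp add: madd_def e1_def e2_def fun_eq_iff)

lemma mindices_mono: "k \<le> k' \<Longrightarrow> mindices n k \<subseteq> mindices n k'"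
  by (auto simp: mindices_def)

lemma madd_e1_in: "a \<in> mindices n k \<Longrightarrow> i < n \<Longrightarrow> madd a (e1 i) \<in> mindices n (Suc k)"
  by (auto simp: mindices_def mdeg_madd mdeg_e1) (auto simp: madd_def e1_def)

lemma T_step:
  fixes y :: "mindex \<Rightarrow> real"
  assumes y0: "y mzero = 1"
    and diag: "\<And>a. a \<in> mindices n d \<Longrightarrow> 0 \<le> y (madd a a)"
    and loc: "\<And>a. a \<in> mindices n k \<Longrightarrow> (\<Sum>i<n. y (madd (madd a a) (e2 i))) \<le> R^2 * y (madd a a)"
    and kd: "Suc k \<le> d"
  shows "(\<Sum>a\<in>mindices n (Suc k). y (madd a a)) \<le> 1 + R^2 * (\<Sum>a\<in>mindices n k. y (madd a a))"
proof -
  let ?D = "\<lambda>a. y (madd a a)"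
  let ?B = "mindices n (Suc k) - {mzero}"
  have finB: "finite ?B" using mindices_finite by auto
  have subd: "mindices n (Suc k) \<subseteq> mindices n d" using kd by (rule mindices_mono)
  have "(\<Sum>a\<in>mindices n (Suc k). ?D a) = ?D mzero + (\<Sum>a\<in>?B. ?D a)"
    by (rule sum.remove[OF mindices_finite mzero_in])
  also have "?D mzero = 1" using y0 by (simp add: madd_def mzero_def)
  also have "(\<Sum>a\<in>?B. ?D a) \<le> (\<Sum>a\<in>?B. \<Sum>i<n. if a i > 0 then ?D a else 0)"
  proof (rule sum_mono)
    fix a assume aB: "a \<in> ?B"
    then obtain i where i: "i < n" "a i > 0"
      by (auto simp: mindices_def mzero_def fun_eq_iff) (metis gr0I not_le)
    have nn: "0 \<le> ?D a" using aB subd diag by auto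
    have "?D a = (if a i > 0 then ?D a else 0)" using i by simp
    also have "\<dots> \<le> (\<Sum>i<n. if a i > 0 then ?D a else 0)"
      by (rule member_le_sum) (use i nn in auto)
    finally show "?D a \<le> (\<Sum>i<n. if a i > 0 then ?D a else 0)" .
  qed
  also have "\<dots> = (\<Sum>i<n. \<Sum>a\<in>?B. if a i > 0 then ?D a else 0)" by (rule sum.swap)
  also have "\<dots> = (\<Sum>i<n. \<Sum>a\<in>{a\<in>?B. a i > 0}. ?D a)"
    by (rule sum.cong[OF refl], rule sum.inter_filter[OF finB, symmetric])
  also have "\<dots> \<le> (\<Sum>i<n. \<Sum>a\<in>mindices n k. ?D (madd a (e1 i)))"
  proof (rule sum_mono)
    fix i assume i: "i \<in> {..<n}"
    let ?F = "{a\<in>?B. a i > 0}"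
    let ?sub = "\<lambda>b::mindex. \<lambda>j. b j - e1 i j"
    have hback: "madd (?sub b) (e1 i) = b" if "b \<in> ?F" for b
      using that by (auto simp: madd_def e1_def fun_eq_iff)
    have inj: "inj_on ?sub ?F"
    proof
      fix u v assume "u \<in> ?F" "v \<in> ?F" "?sub u = ?sub v"
      thus "u = v" using hback[of u] hback[of v] by metis
    qed
    have "(\<Sum>a\<in>?F. ?D a) = (\<Sum>a\<in>?F. ?D (madd (?sub a) (e1 i)))"
      by (rule sum.cong) (auto simp: hback)
    also have "\<dots> = (\<Sum>a\<in>?sub ` ?F. ?D (madd a (e1 i)))"
      by (subst sum.reindex[OF inj]) (simp add: o_def)
    also have "\<dots> \<le> (\<Sum>a\<in>mindices n k. ?D (madd a (e1 i)))"
    proof (rule sum_mono2[OF mindices_finite])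
      show "?sub ` ?F \<subseteq> mindices n k"
      proof
        fix a assume "a \<in> ?sub ` ?F"
        then obtain b where b: "b \<in> ?F" and ab: "a = ?sub b" by blast
        have "mdeg b n = mdeg a n + 1" using hback[OF b] ab mdeg_madd[of a "e1 i" n] mdeg_e1[of i n] i by simp
        moreover have "mdeg b n \<le> Suc k" "\<forall>j\<ge>n. b j = 0" using b by (auto simp: mindices_def)
        ultimately show "a \<in> mindices n k" using ab by (auto simp: mindices_def)
      qed
      show "0 \<le> ?D (madd a (e1 i))" if "a \<in> mindices n k - ?sub ` ?F" for a
        using that i madd_e1_in[of a n k i] subd diag by auto
    qed
    finally show "(\<Sum>a\<in>?F. ?D a) \<le> (\<Sum>a\<in>mindices n k. ?D (madd a (e1 i)))" .
  qed
  also have "\<dots> = (\<Sum>a\<in>mindices n k. \<Sum>i<n. y (madd (madd a a) (e2 i)))"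
    by (subst sum.swap) (simp add: D_e1')
  also have "\<dots> \<le> (\<Sum>a\<in>mindices n k. R^2 * ?D a)" by (rule sum_mono) (rule loc)
  also have "\<dots> = R^2 * (\<Sum>a\<in>mindices n k. ?D a)" by (simp add: sum_distrib_left)
  finally show ?thesis by simp
qed


lemma T_bound:
  fixes y :: "mindex \<Rightarrow> real"
  assumes y0: "y mzero = 1"
    and diag: "\<And>a. a \<in> mindices n d \<Longrightarrow> 0 \<le> y (madd a a)"
    and loc: "\<And>a. a \<in> mindices n (d - 1) \<Longrightarrow> (\<Sum>i<n. y (madd (madd a a) (e2 i))) \<le> R^2 * y (madd a a)"
  shows "k \<le> d \<Longrightarrow> (\<Sum>a\<in>mindices n k. y (madd a a)) \<le> (\<Sum>j\<le>k. R^(2*j))"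
proof (induction k)
  case 0
  thus ?case using y0 by (simp add: mindices_0 madd_def mzero_def)
next
  case (Suc k)
  have loc': "\<And>a. a \<in> mindices n k \<Longrightarrow> (\<Sum>i<n. y (madd (madd a a) (e2 i))) \<le> R^2 * y (madd a a)"
  proof -
    fix a assume "a \<in> mindices n k"
    moreover have "k \<le> d - 1" using Suc.prems by simp
    ultimately have "a \<in> mindices n (d - 1)" using mindices_mono[of k "d - 1" n] by blast
    thus "(\<Sum>i<n. y (madd (madd a a) (e2 i))) \<le> R^2 * y (madd a a)" by (rule loc)
  qed
  have "(\<Sum>a\<in>mindices n (Suc k). y (madd a a)) \<le> 1 + R^2 * (\<Sum>a\<in>mindices n k. y (madd a a))"
    by (rule T_step[OF y0 diag loc' Suc.prems])
  also have "\<dots> \<le> 1 + R^2 * (\<Sum>j\<le>k. R^(2*j))"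
    using Suc by (intro add_left_mono mult_left_mono) auto
  also have "\<dots> = (\<Sum>j\<le>Suc k. R^(2*j))"
    by (subst sum.atMost_Suc_shift) (simp add: sum_distrib_left power_add power_mult power2_eq_square mult.assoc)
  finally show ?case .
qed

theorem lemma3:
  fixes n m d :: nat and R :: real and g :: "nat \<Rightarrow> rpoly" and y :: "mindex \<Rightarrow> real"
  assumes polys: "\<forall>i\<in>{1..m}. is_poly n (g i)"
    and m_pos: "1 \<le> m"
    and ball: "g m = ball_poly n R"
    and d_ge: "d_min n g m \<le> d"
    and feas: "feasible_Pd n g m d y"
  shows "sqrt (\<Sum>\<alpha>\<in>mindices n (2 * d). (y \<alpha>)\<^sup>2)
           \<le> sqrt (real ((n + d) choose n)) * (\<Sum>k\<le>d. R ^ (2 * k))"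
proof -
  let ?S = "(\<Sum>k\<le>d. R ^ (2 * k))"
  have Sge: "1 \<le> ?S"
  proof -
    have "R^(2*0) \<le> ?S" by (rule member_le_sum) (auto simp: power_mult)
    thus ?thesis by simp
  qed
  have bin: "1 \<le> sqrt (real ((n + d) choose n))"
  proof -
    have "n \<le> n + d" by simp
    hence "0 < (n + d) choose n" by (rule zero_less_binomial)
    hence "(1::real) \<le> real ((n + d) choose n)" by (simp add: Suc_le_eq)
    thus ?thesis by simp
  qed
  have y0: "y mzero = 1" using feas by (simp add: feasible_Pd_def)
  have key: "sqrt (\<Sum>\<alpha>\<in>mindices n (2 * d). (y \<alpha>)\<^sup>2) \<le> ?S"
  proof (cases "n = 0")
    case True
    have "mindices n (2*d) = {mzero}" using True by (auto simp: mindices_def mzero_def fun_eq_iff mdeg_def)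
    thus ?thesis using y0 Sge by simp
  next
    case False
    hence n1: "n \<ge> 1" by simp
    have psd0: "psd_on (mindices n d) (\<lambda>a b. y (madd a b))"
    proof -
      have "psd_on (mindices n (d - halfdeg n (gpoly g 0))) (locmat n (gpoly g 0) y)"
        using feas by (simp add: feasible_Pd_def)
      moreover have "locmat n one_poly y = (\<lambda>a b. y (madd a b))" by (simp add: fun_eq_iff locmat_one)
      ultimately show ?thesis by (simp add: gpoly_def halfdeg_one)
    qed
    have "halfdeg n (gpoly g m) \<le> d_min n g m"
      unfolding d_min_def by (rule Max_ge) (use m_pos in auto)
    moreover have "halfdeg n (gpoly g m) = 1"
      using m_pos ball pdeg_ball[OF n1] by (simp add: gpoly_def halfdeg_def)
    ultimately have d1: "1 \<le> d" using d_ge by simp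
    have psdm: "psd_on (mindices n (d - 1)) (locmat n (ball_poly n R) y)"
    proof -
      have "psd_on (mindices n (d - halfdeg n (gpoly g m))) (locmat n (gpoly g m) y)"
        using feas by (simp add: feasible_Pd_def)
      moreover have "gpoly g m = ball_poly n R" using m_pos ball by (simp add: gpoly_def)
      ultimately show ?thesis using \<open>halfdeg n (gpoly g m) = 1\<close> by simp
    qed
    have diag: "\<And>a. a \<in> mindices n d \<Longrightarrow> 0 \<le> y (madd a a)"
      using psd_diag[OF mindices_finite psd0] by simp
    have loc: "\<And>a. a \<in> mindices n (d - 1) \<Longrightarrow> (\<Sum>i<n. y (madd (madd a a) (e2 i))) \<le> R^2 * y (madd a a)"
      using psd_diag[OF mindices_finite psdm] locmat_ball[OF n1] by fastforce
    have tr: "(\<Sum>a\<in>mindices n d. y (madd a a)) \<le> ?S"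
      using T_bound[OF y0 diag loc, of d] by simp
    have tr0: "0 \<le> (\<Sum>a\<in>mindices n d. y (madd a a))" by (rule sum_nonneg) (rule diag)
    have "(\<Sum>\<alpha>\<in>mindices n (2 * d). (y \<alpha>)\<^sup>2) \<le> (\<Sum>a\<in>mindices n d. \<Sum>b\<in>mindices n d. (y (madd a b))^2)"
      by (rule norm_bound)
    also have "\<dots> \<le> (\<Sum>a\<in>mindices n d. y (madd a a))^2"
      by (rule psd_frob[OF mindices_finite psd0])
        (simp add: madd_def add.commute)
    also have "\<dots> \<le> ?S^2" using tr tr0 by (simp add: power_mono)
    finally have h: "(\<Sum>\<alpha>\<in>mindices n (2 * d). (y \<alpha>)\<^sup>2) \<le> ?S^2" .
    have "sqrt (\<Sum>\<alpha>\<in>mindices n (2 * d). (y \<alpha>)\<^sup>2) \<le> sqrt (?S^2)"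
      using h by (rule real_sqrt_le_mono)
    also have "sqrt (?S^2) = ?S" using Sge by simp
    finally show ?thesis .
  qed
  also have "\<dots> \<le> sqrt (real ((n + d) choose n)) * ?S"
    using bin Sge by (simp add: mult_le_cancel_right1)
  finally show ?thesis .
qed

end
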